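(* Let $X=\Sigma_P$ be a one-sided subshift on an at most countable alphabet $S$ with transition matrix $P$, let $p:X\to\mathbb{R}$ be a function, $\mathcal{C}\subset\Sigma_P^*$ and $\eta>0$. Let $\varphi_1,\varphi_2:X\to\mathbb{R}_{>0}$ be bounded and bounded away from zero, with $-\infty<\mathcal{P}_{\varphi_i}(p,\mathcal{C})<0$ for $i=1,2$. Then \[\frac{1}{\mathcal{P}_{\varphi_1+\varphi_2}(p,\mathcal{C})}\ge\frac{1}{\mathcal{P}_{\varphi_1}(p,\mathcal{C})}+\frac{1}{\mathcal{P}_{\varphi_2}(p,\mathcal{C})}.\]
   Context: $\Sigma_P=\{x\in S^{\mathbb{N}}:p_{x_i,x_{i+1}}\ne0\ \forall i\}$ with the shift $\theta$; $\Sigma_P^*$ is the set of finite admissible words, $|w|$ the length and $[w]$ the cylinder of $w$. For $f:X\to\mathbb{R}$, $S_wf=\sup_{x\in[w]}\sum_{k=0}^{|w|-1}f\circ\theta^k(x)$. For $\varphi\ge0$, the $\varphi$-induced pressure of $p$ with respect to $\mathcal{C}$ is $\mathcal{P}_\varphi(p,\mathcal{C})=\limsup_{t\to\infty}\frac1t\log\sum_{w\in\mathcal{C},\,t-\eta<S_w\varphi\le t}\exp(S_wp)$. *)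

theory Defs
  imports "HOL-Analysis.Analysis"
begin

definition subshift :: "'a set \<Rightarrow> ('a \<Rightarrow> 'a \<Rightarrow> real) \<Rightarrow> (nat \<Rightarrow> 'a) set" where
  "subshift S P = {x. (\<forall>i. x i \<in> S) \<and> (\<forall>i. P (x i) (x (Suc i)) \<noteq> 0)}"

definition shift :: "(nat \<Rightarrow> 'a) \<Rightarrow> (nat \<Rightarrow> 'a)" where
  "shift x = (\<lambda>i. x (Suc i))"

definition admissible_words :: "'a set \<Rightarrow> ('a \<Rightarrow> 'a \<Rightarrow> real) \<Rightarrow> 'a list set" where
  "admissible_words S P = {w. set w \<subseteq> S \<and> (\<forall>i. Suc i < length w \<longrightarrow> P (w ! i) (w ! Suc i) \<noteq> 0)}"

definition cylinder :: "'a set \<Rightarrow> ('a \<Rightarrow> 'a \<Rightarrow> real) \<Rightarrow> 'a list \<Rightarrow> (nat \<Rightarrow> 'a) set" where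
  "cylinder S P w = {x \<in> subshift S P. \<forall>i < length w. x i = w ! i}"

text \<open>S_w f = sup over the cylinder of the Birkhoff sum (in ereal; empty cylinder gives -\<infinity>).\<close>
definition word_sum :: "'a set \<Rightarrow> ('a \<Rightarrow> 'a \<Rightarrow> real) \<Rightarrow> ((nat \<Rightarrow> 'a) \<Rightarrow> real) \<Rightarrow> 'a list \<Rightarrow> ereal" where
  "word_sum S P f w = (SUP x \<in> cylinder S P w. ereal (\<Sum>k<length w. f ((shift ^^ k) x)))"

definition exp_ereal :: "ereal \<Rightarrow> ennreal" where
  "exp_ereal a = (if a = -\<infinity> then 0 else if a = \<infinity> then \<infinity> else ennreal (exp (real_of_ereal a)))"

definition ln_ennreal :: "ennreal \<Rightarrow> ereal" where
  "ln_ennreal s = (if s = 0 then -\<infinity> else if s = \<infinity> then \<infinity> else ereal (ln (enn2real s)))"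

definition induced_pressure ::
  "'a set \<Rightarrow> ('a \<Rightarrow> 'a \<Rightarrow> real) \<Rightarrow> real \<Rightarrow> ((nat \<Rightarrow> 'a) \<Rightarrow> real) \<Rightarrow> ((nat \<Rightarrow> 'a) \<Rightarrow> real) \<Rightarrow> 'a list set \<Rightarrow> ereal" where
  "induced_pressure S P \<eta> \<phi> p C =
     Limsup at_top (\<lambda>t::real. ereal (1 / t) *
        ln_ennreal (infsum (\<lambda>w. exp_ereal (word_sum S P p w))
           {w \<in> C. ereal (t - \<eta>) < word_sum S P \<phi> w \<and> word_sum S P \<phi> w \<le> ereal t}))"

end

theory Submission
  imports Defs
begin


lemma funpow_shift: "(shift ^^ k) x = (\<lambda>i. x (i + k))"
  by (induction k arbitrary: x) (auto simp: shift_def funpow_Suc_right)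

lemma shift_subshift: "x \<in> subshift S P \<Longrightarrow> (shift ^^ k) x \<in> subshift S P"
  by (auto simp: funpow_shift subshift_def)

lemma ws_mono:
  assumes "\<And>x. x \<in> subshift S P \<Longrightarrow> f x \<le> g x"
  shows "word_sum S P f w \<le> word_sum S P g w"
  unfolding word_sum_def
proof (rule SUP_mono)
  fix x assume "x \<in> cylinder S P w"
  hence "x \<in> subshift S P" by (simp add: cylinder_def)
  hence "(\<Sum>k<length w. f ((shift ^^ k) x)) \<le> (\<Sum>k<length w. g ((shift ^^ k) x))"
    by (intro sum_mono assms shift_subshift)
  thus "\<exists>m\<in>cylinder S P w. ereal (\<Sum>k<length w. f ((shift ^^ k) x)) \<le> ereal (\<Sum>k<length w. g ((shift ^^ k) m))"
    using \<open>x \<in> cylinder S P w\<close> by auto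
qed

lemma ws_add:
  "word_sum S P (\<lambda>x. f x + g x) w \<le> word_sum S P f w + word_sum S P g w"
  unfolding word_sum_def
proof (rule SUP_least)
  fix x assume x: "x \<in> cylinder S P w"
  have "ereal (\<Sum>k<length w. f ((shift ^^ k) x) + g ((shift ^^ k) x))
      = ereal (\<Sum>k<length w. f ((shift ^^ k) x)) + ereal (\<Sum>k<length w. g ((shift ^^ k) x))"
    by (simp add: sum.distrib)
  also have "\<dots> \<le> (SUP x\<in>cylinder S P w. ereal (\<Sum>k<length w. f ((shift ^^ k) x)))
      + (SUP x\<in>cylinder S P w. ereal (\<Sum>k<length w. g ((shift ^^ k) x)))"
    by (intro add_mono SUP_upper x)
  finally show "ereal (\<Sum>k<length w. f ((shift ^^ k) x) + g ((shift ^^ k) x)) \<le> \<dots>" .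
qed

lemma ws_empty: "cylinder S P w = {} \<Longrightarrow> word_sum S P f w = -\<infinity>"
  by (simp add: word_sum_def bot_ereal_def)

lemma ws_nonneg:
  assumes "cylinder S P w \<noteq> {}" "\<And>x. x \<in> subshift S P \<Longrightarrow> 0 \<le> f x"
  shows "0 \<le> word_sum S P f w"
proof -
  obtain x where x: "x \<in> cylinder S P w" using assms(1) by auto
  hence "x \<in> subshift S P" by (simp add: cylinder_def)
  hence "0 \<le> ereal (\<Sum>k<length w. f ((shift ^^ k) x))"
    by (simp add: sum_nonneg assms(2) shift_subshift)
  also have "\<dots> \<le> word_sum S P f w" unfolding word_sum_def by (rule SUP_upper[OF x])
  finally show ?thesis .
qed

lemma infsum_mono_set_enn:
  "A \<subseteq> B \<Longrightarrow> infsum (f :: _ \<Rightarrow> ennreal) A \<le> infsum f B"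
  by (rule infsum_mono_neutral) (auto intro: nonneg_summable_on_complete)

lemma infsum_Un_le_enn:
  "infsum (f :: _ \<Rightarrow> ennreal) (A \<union> B) \<le> infsum f A + infsum f B"
proof -
  have "A \<union> B = A \<union> (B - A)" by auto
  hence "infsum f (A \<union> B) = infsum f A + infsum f (B - A)"
    by (metis Diff_disjoint infsum_Un_disjoint nonneg_summable_on_complete zero_le)
  also have "\<dots> \<le> infsum f A + infsum f B"
    by (intro add_left_mono infsum_mono_set_enn) auto
  finally show ?thesis .
qed

lemma infsum_UN_le_enn:
  "finite K \<Longrightarrow> infsum (f :: _ \<Rightarrow> ennreal) (\<Union>k\<in>K. D k) \<le> (\<Sum>k\<in>K. infsum f (D k))"
proof (induction K rule: finite_induct)
  case empty thus ?case by simp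
next
  case (insert k K)
  have "infsum f (\<Union>k\<in>insert k K. D k) = infsum f (D k \<union> (\<Union>k\<in>K. D k))" by simp
  also have "\<dots> \<le> infsum f (D k) + infsum f (\<Union>k\<in>K. D k)" by (rule infsum_Un_le_enn)
  also have "\<dots> \<le> infsum f (D k) + (\<Sum>k\<in>K. infsum f (D k))" by (intro add_left_mono insert.IH)
  also have "\<dots> = (\<Sum>k\<in>insert k K. infsum f (D k))" using insert.hyps by simp
  finally show ?case .
qed



lemma pressure_upper:
  fixes Z :: "real \<Rightarrow> ennreal"
  assumes "Limsup at_top (\<lambda>t. ereal (1/t) * ln_ennreal (Z t)) < ereal r"
  shows "\<forall>\<^sub>F t in at_top. Z t \<le> ennreal (exp (r * t))"
proof -
  have ev: "\<forall>\<^sub>F t in at_top. ereal (1/t) * ln_ennreal (Z t) < ereal r \<and> t > 0"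
    using Limsup_lessD[OF assms] eventually_gt_at_top[of 0] by (rule eventually_conj)
  show ?thesis
  proof (rule eventually_mono[OF ev])
    fix t assume h: "ereal (1/t) * ln_ennreal (Z t) < ereal r \<and> t > 0"
    show "Z t \<le> ennreal (exp (r * t))"
    proof (cases "Z t = 0")
      case True thus ?thesis by simp
    next
      case False
      show ?thesis
      proof (cases "Z t = \<infinity>")
        case True
        hence "ln_ennreal (Z t) = \<infinity>" by (simp add: ln_ennreal_def)
        moreover have "ereal (1/t) * \<infinity> = \<infinity>" using h by (subst ereal_mult_infty) auto
        ultimately show ?thesis using h by auto
      next
        case inf: False
        define z where "z = enn2real (Z t)"
        have Zz: "Z t = ennreal z" and zpos: "z > 0" using False inf unfolding z_def
          by (auto simp: enn2real_positive_iff less_top intro: gr_zeroI)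
        have "ln_ennreal (Z t) = ereal (ln z)" using False inf by (simp add: ln_ennreal_def z_def)
        hence "ln z / t < r" using h by simp
        hence "ln z < r * t" using h by (simp add: divide_less_eq)
        hence "z < exp (r * t)" using zpos by (metis exp_less_cancel_iff exp_ln)
        thus ?thesis using Zz by (simp add: ennreal_leI)
      qed
    qed
  qed
qed

lemma pressure_le:
  fixes Z :: "real \<Rightarrow> ennreal"
  assumes "\<forall>\<^sub>F t in at_top. Z t \<le> ennreal (B t)" "\<forall>\<^sub>F t in at_top. B t > 0"
    and "((\<lambda>t. ln (B t) / t) \<longlongrightarrow> L) at_top"
  shows "Limsup at_top (\<lambda>t. ereal (1/t) * ln_ennreal (Z t)) \<le> ereal L"
proof -
  have "Limsup at_top (\<lambda>t. ereal (1/t) * ln_ennreal (Z t)) \<le> Limsup at_top (\<lambda>t. ereal (ln (B t) / t))"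
  proof (rule Limsup_mono)
    show "\<forall>\<^sub>F t in at_top. ereal (1/t) * ln_ennreal (Z t) \<le> ereal (ln (B t) / t)"
      using assms(1,2) eventually_gt_at_top[of 0]
    proof eventually_elim
      case (elim t)
      show ?case
      proof (cases "Z t = 0")
        case True thus ?thesis using elim by (simp add: ln_ennreal_def)
      next
        case False
        have inf: "Z t \<noteq> \<infinity>" using elim by (metis ennreal_less_top infinity_ennreal_def leD)
        define z where "z = enn2real (Z t)"
        have Zz: "Z t = ennreal z" and zpos: "z > 0" using False inf unfolding z_def
          by (auto simp: enn2real_positive_iff less_top intro: gr_zeroI)
        have "ln_ennreal (Z t) = ereal (ln z)" using False inf by (simp add: ln_ennreal_def z_def)
        moreover have "z \<le> B t" using elim Zz zpos by (simp add: ennreal_le_iff2)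
        hence "ln z \<le> ln (B t)" using zpos by simp
        hence "ln z / t \<le> ln (B t) / t" using elim by (simp add: divide_right_mono)
        ultimately show ?thesis by simp
      qed
    qed
  qed
  also have "\<dots> = ereal L"
    by (rule lim_imp_Limsup) (simp_all add: assms(3))
  finally show ?thesis .
qed

lemma lim_aux:
  fixes c q K :: real assumes "c > 0"
  shows "((\<lambda>t. ln ((c * t)^2 * exp (- q * (t - K))) / t) \<longlongrightarrow> - q) at_top"
proof -
  have inf: "filterlim (\<lambda>t::real. t) at_infinity at_top"
    by (rule filterlim_at_top_imp_at_infinity[OF filterlim_ident])
  have "((\<lambda>t. 2 * ln c / t + 2 * (ln t / t) - q + q * K / t) \<longlongrightarrow> 0 + 2 * 0 - q + 0) at_top"
    by (intro tendsto_intros tendsto_divide_0[OF tendsto_const inf] ln_x_over_x_tendsto_0)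
  hence l: "((\<lambda>t. 2 * ln c / t + 2 * (ln t / t) - q + q * K / t) \<longlongrightarrow> - q) at_top" by simp
  have "\<forall>\<^sub>F t in at_top. 2 * ln c / t + 2 * (ln t / t) - q + q * K / t = ln ((c * t)^2 * exp (- q * (t - K))) / t"
    using eventually_gt_at_top[of 0]
  proof eventually_elim
    case (elim t)
    have "ln ((c * t)^2 * exp (- q * (t - K))) = 2 * ln c + 2 * ln t - q * t + q * K"
      using elim assms by (simp add: ln_mult ln_realpow algebra_simps)
    thus ?case using elim by (simp add: field_simps)
  qed
  thus ?thesis using l by (rule Lim_transform_eventually[rotated])
qed



lemma key_real:
  fixes a b u v X :: real
  assumes "a > 0" "b > 0" "u + v > X" "u \<ge> 0" "v \<ge> 0"
  shows "a * b / (a + b) * X \<le> a * u \<or> a * b / (a + b) * X \<le> b * v"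
proof (rule ccontr)
  assume "\<not> ?thesis"
  hence h1: "a * b / (a + b) * X > a * u" and h2: "a * b / (a + b) * X > b * v" by auto
  have "u < b / (a + b) * X"
  proof -
    have "a * u < a * (b / (a + b) * X)" using h1 by (simp add: algebra_simps)
    thus ?thesis using mult_less_cancel_left_pos[OF assms(1)] by blast
  qed
  moreover have "v < a / (a + b) * X"
  proof -
    have "b * v < b * (a / (a + b) * X)" using h2 by (simp add: algebra_simps)
    thus ?thesis using mult_less_cancel_left_pos[OF assms(2)] by blast
  qed
  ultimately have lt: "u + v < b / (a + b) * X + a / (a + b) * X" by linarith
  have "a + b > 0" using assms by simp
  hence "b / (a + b) * X + a / (a + b) * X = (b + a) / (a + b) * X" by (simp add: add_divide_distrib ring_distribs)
  also have "\<dots> = X" using \<open>a + b > 0\<close> by (simp add: add.commute)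
  finally show False using assms(3) lt by simp
qed

lemma q_le:
  fixes a b :: real assumes "a > 0" "b > 0"
  shows "a * b / (a + b) \<le> b" "a * b / (a + b) \<le> a"
  using assms by (simp_all add: field_simps)

lemma pair_choice:
  fixes a b u v T t \<eta> :: real
  assumes "a > 0" "b > 0" "u + v > t - \<eta>" "u \<ge> 0" "v \<ge> 0" "T \<ge> 0" "t \<ge> 2 * T + 2 * \<eta>" "\<eta> > 0"
  shows "(u \<ge> T \<and> a * b / (a + b) * (t - \<eta> - T) \<le> a * u) \<or>
         (v \<ge> T \<and> a * b / (a + b) * (t - \<eta> - T) \<le> b * v)"
proof -
  define q where "q = a * b / (a + b)"
  have qa: "q \<le> a" and qb: "q \<le> b" and q0: "q \<ge> 0" using q_le[OF assms(1,2)] assms(1,2) unfolding q_def by auto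
  have X0: "t - \<eta> - T \<ge> 0" using assms by simp
  show ?thesis
  proof (cases "u < T")
    case True
    hence "v \<ge> t - \<eta> - T" using assms by simp
    moreover have "v \<ge> T" using True assms by simp
    moreover have "q * (t - \<eta> - T) \<le> b * (t - \<eta> - T)" using qb X0 by (rule mult_right_mono)
    moreover have "b * (t - \<eta> - T) \<le> b * v" using \<open>v \<ge> t - \<eta> - T\<close> assms(2) by simp
    ultimately show ?thesis unfolding q_def by auto
  next
    case uT: False
    show ?thesis
    proof (cases "v < T")
      case True
      hence "u \<ge> t - \<eta> - T" using assms by simp
      moreover have "q * (t - \<eta> - T) \<le> a * (t - \<eta> - T)" using qa X0 by (rule mult_right_mono)
      moreover have "a * (t - \<eta> - T) \<le> a * u" using \<open>u \<ge> t - \<eta> - T\<close> assms(1) by simp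
      ultimately show ?thesis using uT unfolding q_def by auto
    next
      case False
      have "u + v > t - \<eta> - T" using assms by simp
      from key_real[OF assms(1,2) this assms(4,5)] show ?thesis using uT False by auto
    qed
  qed
qed



lemma core:
  fixes S :: "'a set" and P :: "'a \<Rightarrow> 'a \<Rightarrow> real"
    and p \<phi>1 \<phi>2 :: "(nat \<Rightarrow> 'a) \<Rightarrow> real" and C :: "'a list set" and \<eta> a b T t :: real
  defines "f \<equiv> \<lambda>w. exp_ereal (word_sum S P p w)"
  defines "A \<equiv> \<lambda>\<phi> t. {w\<in>C. ereal (t - \<eta>) < word_sum S P \<phi> w \<and> word_sum S P \<phi> w \<le> ereal t}"
  assumes eta: "\<eta> > 0" and ab: "a > 0" "b > 0" and T: "T \<ge> 0"
    and nn1: "\<And>x. x \<in> subshift S P \<Longrightarrow> 0 \<le> \<phi>1 x"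
    and nn2: "\<And>x. x \<in> subshift S P \<Longrightarrow> 0 \<le> \<phi>2 x"
    and Z1: "\<And>s. s \<ge> T \<Longrightarrow> infsum f (A \<phi>1 s) \<le> ennreal (exp (- a * s))"
    and Z2: "\<And>s. s \<ge> T \<Longrightarrow> infsum f (A \<phi>2 s) \<le> ennreal (exp (- b * s))"
    and t: "t \<ge> 2 * T + 2 * \<eta>" "t \<ge> 2"
  shows "infsum f (A (\<lambda>x. \<phi>1 x + \<phi>2 x) t)
     \<le> ennreal (((1 / \<eta> + 1) * t)^2 * exp (- (a * b / (a + b)) * (t - \<eta> - T)))"
proof -
  define q where "q = a * b / (a + b)"
  define E where "E = exp (- q * (t - \<eta> - T))"
  define N where "N = nat \<lceil>t / \<eta>\<rceil>"
  define \<phi> where "\<phi> = (\<lambda>x. \<phi>1 x + \<phi>2 x)"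
  define D where "D = (\<lambda>(i::nat, j::nat). A \<phi> t \<inter> A \<phi>1 (real i * \<eta>) \<inter> A \<phi>2 (real j * \<eta>))"
  define K where "K = {0..N} \<times> {0..N}"
  have bin: "\<exists>i\<in>{0..N}. w \<in> A \<psi> (real i * \<eta>)"
    if w: "w \<in> C" and lo: "0 \<le> word_sum S P \<psi> w" and hi: "word_sum S P \<psi> w \<le> ereal t" for w \<psi>
  proof -
    obtain x where x: "word_sum S P \<psi> w = ereal x" using lo hi by (cases "word_sum S P \<psi> w") auto
    have x0: "0 \<le> x" and xt: "x \<le> t" using lo hi x by auto
    define i where "i = nat \<lceil>x / \<eta>\<rceil>"
    have ri: "real i = of_int \<lceil>x / \<eta>\<rceil>" using x0 eta unfolding i_def by simp
    have "x / \<eta> \<le> real i" "real i < x / \<eta> + 1" using ri by linarith+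
    hence "x \<le> real i * \<eta>" "real i * \<eta> - \<eta> < x" using eta by (simp_all add: field_simps)
    moreover have "i \<le> N" unfolding i_def N_def using xt eta
      by (intro nat_mono ceiling_mono divide_right_mono) auto
    ultimately show ?thesis using w x unfolding A_def by auto
  qed
  have cover: "A \<phi> t \<subseteq> (\<Union>k\<in>K. D k)"
  proof
    fix w assume w: "w \<in> A \<phi> t"
    hence wC: "w \<in> C" and gt: "ereal (t - \<eta>) < word_sum S P \<phi> w" and le: "word_sum S P \<phi> w \<le> ereal t"
      unfolding A_def by auto
    have cyl: "cylinder S P w \<noteq> {}"
    proof
      assume "cylinder S P w = {}"
      hence "word_sum S P \<phi> w = -\<infinity>" by (rule ws_empty)
      thus False using gt by simp
    qed
    have l1: "word_sum S P \<phi>1 w \<le> word_sum S P \<phi> w"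
      by (rule ws_mono) (simp add: \<phi>_def nn2)
    have l2: "word_sum S P \<phi>2 w \<le> word_sum S P \<phi> w"
      by (rule ws_mono) (simp add: \<phi>_def nn1)
    obtain i where i: "i \<in> {0..N}" "w \<in> A \<phi>1 (real i * \<eta>)"
      using bin[OF wC ws_nonneg[OF cyl nn1]] l1 le by fastforce
    obtain j where j: "j \<in> {0..N}" "w \<in> A \<phi>2 (real j * \<eta>)"
      using bin[OF wC ws_nonneg[OF cyl nn2]] l2 le by fastforce
    have "w \<in> D (i, j)" "(i, j) \<in> K" using i j w unfolding D_def K_def by auto
    thus "w \<in> (\<Union>k\<in>K. D k)" by blast
  qed
  have pair: "infsum f (D k) \<le> ennreal E" for k
  proof (cases k)
    case (Pair i j)
    show ?thesis
    proof (cases "D k = {}")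
      case True thus ?thesis by simp
    next
      case False
      then obtain w where w: "w \<in> D (i, j)" using Pair by auto
      have s: "word_sum S P \<phi> w \<le> word_sum S P \<phi>1 w + word_sum S P \<phi>2 w"
        unfolding \<phi>_def by (rule ws_add)
      have "ereal (t - \<eta>) < word_sum S P \<phi> w" using w unfolding D_def A_def by auto
      also have "\<dots> \<le> word_sum S P \<phi>1 w + word_sum S P \<phi>2 w" by (rule s)
      also have "\<dots> \<le> ereal (real i * \<eta>) + ereal (real j * \<eta>)"
        using w unfolding D_def A_def by (intro add_mono) auto
      finally have uv: "real i * \<eta> + real j * \<eta> > t - \<eta>" by simp
      have d1: "infsum f (D k) \<le> infsum f (A \<phi>1 (real i * \<eta>))"
        by (rule infsum_mono_set_enn) (auto simp: D_def Pair)
      have d2: "infsum f (D k) \<le> infsum f (A \<phi>2 (real j * \<eta>))"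
        by (rule infsum_mono_set_enn) (auto simp: D_def Pair)
      from pair_choice[OF ab uv _ _ T t(1) eta] eta
      have "(real i * \<eta> \<ge> T \<and> q * (t - \<eta> - T) \<le> a * (real i * \<eta>)) \<or>
            (real j * \<eta> \<ge> T \<and> q * (t - \<eta> - T) \<le> b * (real j * \<eta>))"
        unfolding q_def by auto
      thus ?thesis
      proof
        assume h: "real i * \<eta> \<ge> T \<and> q * (t - \<eta> - T) \<le> a * (real i * \<eta>)"
        have "infsum f (D k) \<le> ennreal (exp (- a * (real i * \<eta>)))" using d1 Z1 h by (blast intro: order.trans)
        also have "\<dots> \<le> ennreal E" unfolding E_def using h by (intro ennreal_leI) simp
        finally show ?thesis .
      next
        assume h: "real j * \<eta> \<ge> T \<and> q * (t - \<eta> - T) \<le> b * (real j * \<eta>)"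
        have "infsum f (D k) \<le> ennreal (exp (- b * (real j * \<eta>)))" using d2 Z2 h by (blast intro: order.trans)
        also have "\<dots> \<le> ennreal E" unfolding E_def using h by (intro ennreal_leI) simp
        finally show ?thesis .
      qed
    qed
  qed
  have "infsum f (A \<phi> t) \<le> infsum f (\<Union>k\<in>K. D k)" by (rule infsum_mono_set_enn[OF cover])
  also have "\<dots> \<le> (\<Sum>k\<in>K. infsum f (D k))" by (rule infsum_UN_le_enn) (simp add: K_def)
  also have "\<dots> \<le> (\<Sum>k\<in>K. ennreal E)" by (rule sum_mono) (rule pair)
  also have "\<dots> = ennreal (real (card K) * E)" by (simp add: ennreal_mult E_def ennreal_of_nat_eq_real_of_nat)
  also have "real (card K) = (real N + 1)^2" by (simp add: K_def power2_eq_square algebra_simps)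
  also have "(real N + 1)^2 * E \<le> ((1 / \<eta> + 1) * t)^2 * E"
  proof -
    have tp: "t / \<eta> > 0" using eta t by simp
    hence "real N = of_int \<lceil>t / \<eta>\<rceil>" unfolding N_def by simp
    hence "real N \<le> t / \<eta> + 1" by linarith
    also have "t / \<eta> + 1 \<le> (1 / \<eta> + 1) * t - 1" using t by (simp add: algebra_simps)
    finally have "real N + 1 \<le> (1 / \<eta> + 1) * t" by simp
    hence "(real N + 1)^2 \<le> ((1 / \<eta> + 1) * t)^2" by (intro power_mono) auto
    thus ?thesis unfolding E_def by (intro mult_right_mono) auto
  qed
  hence "ennreal ((real N + 1)^2 * E) \<le> ennreal (((1 / \<eta> + 1) * t)^2 * E)" by (rule ennreal_leI)
  finally show ?thesis unfolding E_def q_def \<phi>_def .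
qed



lemma inv_le_aux: "(Q::real) > 0 \<Longrightarrow> l \<le> - Q \<Longrightarrow> 1 / (- Q) \<le> 1 / l"
proof -
  assume Q: "Q > 0" and l: "l \<le> - Q"
  have "1 / (- l) \<le> 1 / Q" using Q l by (intro divide_left_mono) (auto simp: mult_neg_pos)
  thus ?thesis by simp
qed

lemma final_ineq:
  fixes a b :: real and L :: ereal
  assumes "a > 0" "b > 0" "L \<le> ereal (- (a * b / (a + b)))"
  shows "1 / L \<ge> 1 / ereal (- a) + 1 / ereal (- b)"
proof -
  have q: "a * b / (a + b) > 0" using assms by simp
  have rhs: "1 / ereal (- a) + 1 / ereal (- b) = ereal (- ((a + b) / (a * b)))"
  proof -
    have "1 / ereal (- a) = ereal (1 / (- a))" using assms by (simp add: one_ereal_def)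
    moreover have "1 / ereal (- b) = ereal (1 / (- b))" using assms by (simp add: one_ereal_def)
    moreover have "1 / (- a) + 1 / (- b) = - ((a + b) / (a * b))" using assms by (simp add: field_simps)
    ultimately show ?thesis by simp
  qed
  show ?thesis
  proof (cases L)
    case (real l)
    have l: "l \<le> - (a * b / (a + b))" using assms real by simp
    hence l0: "l < 0" using q by simp
    have "1 / l \<ge> - ((a + b) / (a * b))"
    proof -
      have "- ((a + b) / (a * b)) = 1 / (- (a * b / (a + b)))" by simp
      also have "\<dots> \<le> 1 / l" by (rule inv_le_aux[OF q l])
      finally show ?thesis .
    qed
    moreover have "1 / ereal l = ereal (1 / l)" using l0 by (simp add: one_ereal_def)
    ultimately show ?thesis using real rhs by simp
  next
    case PInf thus ?thesis using assms by simp
  next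
    case MInf thus ?thesis using rhs assms by (simp add: field_simps)
  qed
qed



theorem proposition6p7:
  fixes S :: "'a set" and P :: "'a \<Rightarrow> 'a \<Rightarrow> real"
    and p \<phi>1 \<phi>2 :: "(nat \<Rightarrow> 'a) \<Rightarrow> real" and C :: "'a list set" and \<eta> :: real
  assumes "countable S"
    and "C \<subseteq> admissible_words S P"
    and "\<eta> > 0"
    and "\<exists>c>0. \<forall>x\<in>subshift S P. c \<le> \<phi>1 x"
    and "\<exists>M. \<forall>x\<in>subshift S P. \<phi>1 x \<le> M"
    and "\<exists>c>0. \<forall>x\<in>subshift S P. c \<le> \<phi>2 x"
    and "\<exists>M. \<forall>x\<in>subshift S P. \<phi>2 x \<le> M"
    and "-\<infinity> < induced_pressure S P \<eta> \<phi>1 p C" and "induced_pressure S P \<eta> \<phi>1 p C < 0"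
    and "-\<infinity> < induced_pressure S P \<eta> \<phi>2 p C" and "induced_pressure S P \<eta> \<phi>2 p C < 0"
  shows "1 / induced_pressure S P \<eta> (\<lambda>x. \<phi>1 x + \<phi>2 x) p C
           \<ge> 1 / induced_pressure S P \<eta> \<phi>1 p C + 1 / induced_pressure S P \<eta> \<phi>2 p C"
proof -
  define f where "f = (\<lambda>w. exp_ereal (word_sum S P p w))"
  define A where "A = (\<lambda>\<phi> t. {w\<in>C. ereal (t - \<eta>) < word_sum S P \<phi> w \<and> word_sum S P \<phi> w \<le> ereal t})"
  define Lp where "Lp = (\<lambda>\<phi>. induced_pressure S P \<eta> \<phi> p C)"
  have Lp_eq: "Lp \<phi> = Limsup at_top (\<lambda>t. ereal (1/t) * ln_ennreal (infsum f (A \<phi> t)))" for \<phi>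
    unfolding Lp_def induced_pressure_def f_def A_def ..
  have nn1: "\<And>x. x \<in> subshift S P \<Longrightarrow> 0 \<le> \<phi>1 x" using assms(4) by force
  have nn2: "\<And>x. x \<in> subshift S P \<Longrightarrow> 0 \<le> \<phi>2 x" using assms(6) by force
  obtain a where a: "Lp \<phi>1 = ereal (- a)" "a > 0"
  proof (cases "Lp \<phi>1")
    case (real r)
    with assms(9) show ?thesis by (intro that[of "- r"]) (auto simp: Lp_def)
  qed (use assms(8,9) in \<open>auto simp: Lp_def\<close>)
  obtain b where b: "Lp \<phi>2 = ereal (- b)" "b > 0"
  proof (cases "Lp \<phi>2")
    case (real r)
    with assms(11) show ?thesis by (intro that[of "- r"]) (auto simp: Lp_def)
  qed (use assms(10,11) in \<open>auto simp: Lp_def\<close>)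
  define q where "q = a * b / (a + b)"
  have q0: "q > 0" using a b unfolding q_def by simp
  define \<phi> where "\<phi> = (\<lambda>x. \<phi>1 x + \<phi>2 x)"
  have eps: "Lp \<phi> \<le> ereal (- ((1 - \<epsilon>) * q))" if e: "0 < \<epsilon>" "\<epsilon> < 1" for \<epsilon>
  proof -
    define a' where "a' = (1 - \<epsilon>) * a"
    define b' where "b' = (1 - \<epsilon>) * b"
    have a'0: "a' > 0" and b'0: "b' > 0" using a b e unfolding a'_def b'_def by auto
    have q': "a' * b' / (a' + b') = (1 - \<epsilon>) * q"
    proof -
      have "a' * b' / (a' + b') = ((1 - \<epsilon>) * ((1 - \<epsilon>) * (a * b))) / ((1 - \<epsilon>) * (a + b))"
        unfolding a'_def b'_def by (simp add: algebra_simps)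
      also have "\<dots> = (1 - \<epsilon>) * (a * b) / (a + b)"
        using e by (intro mult_divide_mult_cancel_left) auto
      finally show ?thesis unfolding q_def by simp
    qed
    have "Lp \<phi>1 < ereal (- a')" using a e unfolding a'_def by (simp add: algebra_simps)
    hence "\<forall>\<^sub>F t in at_top. infsum f (A \<phi>1 t) \<le> ennreal (exp (- a' * t))"
      unfolding Lp_eq by (rule pressure_upper)
    then obtain T1 where T1: "\<And>s. s \<ge> T1 \<Longrightarrow> infsum f (A \<phi>1 s) \<le> ennreal (exp (- a' * s))"
      unfolding eventually_at_top_linorder by blast
    have "Lp \<phi>2 < ereal (- b')" using b e unfolding b'_def by (simp add: algebra_simps)
    hence "\<forall>\<^sub>F t in at_top. infsum f (A \<phi>2 t) \<le> ennreal (exp (- b' * t))"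
      unfolding Lp_eq by (rule pressure_upper)
    then obtain T2 where T2: "\<And>s. s \<ge> T2 \<Longrightarrow> infsum f (A \<phi>2 s) \<le> ennreal (exp (- b' * s))"
      unfolding eventually_at_top_linorder by blast
    define T where "T = max (max T1 T2) 0"
    have T0: "T \<ge> 0" unfolding T_def by simp
    have Z1: "\<And>s. s \<ge> T \<Longrightarrow> infsum f (A \<phi>1 s) \<le> ennreal (exp (- a' * s))"
      using T1 unfolding T_def by simp
    have Z2: "\<And>s. s \<ge> T \<Longrightarrow> infsum f (A \<phi>2 s) \<le> ennreal (exp (- b' * s))"
      using T2 unfolding T_def by simp
    define B where "B = (\<lambda>t. ((1 / \<eta> + 1) * t)^2 * exp (- ((1 - \<epsilon>) * q) * (t - (\<eta> + T))))"
    have evB: "\<forall>\<^sub>F t in at_top. infsum f (A \<phi> t) \<le> ennreal (B t)"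
      using eventually_ge_at_top[of "max (2 * T + 2 * \<eta>) 2"]
    proof eventually_elim
      case (elim t)
      have "infsum f (A \<phi> t) \<le> ennreal (((1 / \<eta> + 1) * t)^2 * exp (- (a' * b' / (a' + b')) * (t - \<eta> - T)))"
        unfolding \<phi>_def f_def A_def
        by (rule core[OF assms(3) a'0 b'0 T0 nn1 nn2 Z1[unfolded f_def A_def] Z2[unfolded f_def A_def]])
           (use elim in auto)
      also have "(t - \<eta> - T) = t - (\<eta> + T)" by simp
      finally show ?case unfolding B_def q' .
    qed
    have "Lp \<phi> \<le> ereal (- ((1 - \<epsilon>) * q))"
      unfolding Lp_eq
    proof (rule pressure_le[OF evB])
      show "\<forall>\<^sub>F t in at_top. B t > 0" using eventually_gt_at_top[of 0]
      proof eventually_elim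
        case (elim t)
        have "(1 / \<eta> + 1) * t > 0" using elim assms(3) by (intro mult_pos_pos add_pos_pos) auto
        thus ?case unfolding B_def by (intro mult_pos_pos) auto
      qed
      show "((\<lambda>t. ln (B t) / t) \<longlongrightarrow> - ((1 - \<epsilon>) * q)) at_top"
        unfolding B_def by (rule lim_aux) (use assms(3) in \<open>simp add: add_pos_pos\<close>)
    qed
    thus ?thesis .
  qed
  have main: "Lp \<phi> \<le> ereal (- q)"
  proof (rule ccontr)
    assume "\<not> ?thesis"
    hence gt: "Lp \<phi> > ereal (- q)" by simp
    have h: "Lp \<phi> \<le> ereal (- (1/2 * q))" using eps[of "1/2"] by simp
    then obtain l where l: "Lp \<phi> = ereal l" using gt by (cases "Lp \<phi>") auto
    have lq: "l > - q" using gt l by simp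
    define \<epsilon> where "\<epsilon> = min (1/2) ((l + q) / (2 * q))"
    have e0: "0 < \<epsilon>" "\<epsilon> < 1" using lq q0 unfolding \<epsilon>_def by auto
    have "l \<le> - ((1 - \<epsilon>) * q)" using eps[OF e0] l by simp
    moreover have "\<epsilon> * q \<le> (l + q) / 2"
    proof -
      have "\<epsilon> \<le> (l + q) / (2 * q)" unfolding \<epsilon>_def by simp
      hence "\<epsilon> * q \<le> (l + q) / (2 * q) * q" using q0 by (intro mult_right_mono) auto
      also have "\<dots> = (l + q) / 2" using q0 by (simp add: field_simps)
      finally show ?thesis .
    qed
    ultimately show False using lq by (simp add: algebra_simps)
  qed
  show ?thesis
    using final_ineq[OF a(2) b(2) main[unfolded q_def]] a(1) b(1) unfolding Lp_def \<phi>_def by simp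
qed


end
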